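(* For every integer $\mathfrak{q}>2$ and every $\mathfrak{p}\in\{1,2,\dots,\mathfrak{q}-1\}$ coprime with $\mathfrak{q}$, there exists a unique $\mathfrak{q}$-periodic sequence $\mathbf{s}\in\{\mathbf A,\mathbf B\}^{\mathbb{Z}}$ such that: $\mathbf{s}[0]=\mathbf A$ and $\mathbf{s}[-1]=\mathbf B$; for every $j\in\mathbb{Z}$ with $(j\bmod\mathfrak{q})\notin\{-\mathfrak{p}\bmod\mathfrak{q},\,-\mathfrak{p}-1\bmod\mathfrak{q}\}$ we have $\mathbf{s}[j+\mathfrak{p}]=\mathbf{s}[j]$; and $\mathbf{s}[-\mathfrak{p}-1]=\mathbf A$, $\mathbf{s}[-\mathfrak{p}]=\mathbf B$.
   Context: $\mathbf A,\mathbf B$ are two symbols; for a sequence $\mathbf{s}=(a_i)_{i\in\mathbb{Z}}$, $\mathbf{s}[i]$ denotes $a_i$. *)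

theory Defs
  imports Main
begin

datatype sym = SymA | SymB

definition periodic_seq :: "int \<Rightarrow> (int \<Rightarrow> sym) \<Rightarrow> bool" where
  "periodic_seq q s \<longleftrightarrow> (\<forall>i. s (i + q) = s i)"

end

theory Submission
  imports Defs "HOL-Number_Theory.Cong"
begin

lemma per_nat: "periodic_seq q s \<Longrightarrow> s (i + int n * q) = s i"
proof (induction n arbitrary: i)
  case 0 then show ?case by simp
next
  case (Suc n)
  have "s (i + int (Suc n) * q) = s ((i + int n * q) + q)" by (simp add: algebra_simps)
  also have "\<dots> = s (i + int n * q)" using Suc.prems by (simp add: periodic_seq_def)
  finally show ?case using Suc by simp
qed

lemma per_mod: assumes "periodic_seq q s" shows "s j = s (j mod q)"
proof (cases "j div q \<ge> 0")
  case True
  have "s (j mod q + int (nat (j div q)) * q) = s (j mod q)" using per_nat[OF assms] .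
  moreover have "j mod q + int (nat (j div q)) * q = j" using True by simp
  ultimately show ?thesis by simp
next
  case False
  have "s (j + int (nat (- (j div q))) * q) = s j" using per_nat[OF assms] .
  moreover have "j + int (nat (- (j div q))) * q = j mod q" using False
    by (simp add: minus_div_mult_eq_mod)
  ultimately show ?thesis by simp
qed

lemma uniq_aux:
  fixes q p :: int
  assumes P1: "periodic_seq q t1 \<and>
           t1 0 = SymA \<and> t1 (-1) = SymB \<and>
           (\<forall>j. j mod q \<notin> {(-p) mod q, (-p-1) mod q} \<longrightarrow> t1 (j + p) = t1 j) \<and>
           t1 (-p-1) = SymA \<and> t1 (-p) = SymB"
  and P2: "periodic_seq q t2 \<and>
           t2 0 = SymA \<and> t2 (-1) = SymB \<and>
           (\<forall>j. j mod q \<notin> {(-p) mod q, (-p-1) mod q} \<longrightarrow> t2 (j + p) = t2 j) \<and>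
           t2 (-p-1) = SymA \<and> t2 (-p) = SymB"
  shows "t1 (int n * p) = t2 (int n * p)"
proof (induction n)
  case 0
  then show ?case using P1 P2 by simp
next
  case (Suc n)
  let ?x = "int n * p"
  have e: "int (Suc n) * p = ?x + p" by (simp add: algebra_simps)
  have m1: "t1 y = t1 (y mod q)" "t2 y = t2 (y mod q)" for y
    using P1 P2 per_mod by blast+
  show ?case
  proof (cases "?x mod q = (-p) mod q")
    case True
    have "(?x + p) mod q = 0"
      using mod_add_left_eq[of ?x q p] True mod_add_left_eq[of "-p" q p] by simp
    then have "t1 (?x+p) = t1 0" "t2 (?x+p) = t2 0"
      using m1[of "?x+p"] by simp_all
    moreover have "t1 0 = t2 0" using P1 P2 by (metis (no_types))
    ultimately show ?thesis unfolding e by metis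
  next
    case F1: False
    show ?thesis
    proof (cases "?x mod q = (-p-1) mod q")
      case True
      have "(?x + p) mod q = (-1) mod q"
        using mod_add_left_eq[of ?x q p] True mod_add_left_eq[of "-p-1" q p] by simp
      then have "t1 (?x+p) = t1 (-1)" "t2 (?x+p) = t2 (-1)" using m1 by metis+
      moreover have "t1 (-1) = t2 (-1)" using P1 P2 by (metis (no_types))
      ultimately show ?thesis unfolding e by metis
    next
      case False
      have "\<forall>j. j mod q \<notin> {(-p) mod q, (-p-1) mod q} \<longrightarrow> t1 (j + p) = t1 j"
           "\<forall>j. j mod q \<notin> {(-p) mod q, (-p-1) mod q} \<longrightarrow> t2 (j + p) = t2 j"
        using P1 P2 by blast+
      then have "t1 (?x+p) = t1 ?x" "t2 (?x+p) = t2 ?x" using F1 False by blast+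
      then show ?thesis unfolding e using Suc.IH by metis
    qed
  qed
qed

theorem lemmaB2:
  fixes q p :: int
  assumes "q > 2" and "1 \<le> p" and "p \<le> q - 1" and "coprime p q"
  shows "\<exists>!s :: int \<Rightarrow> sym.
           periodic_seq q s \<and>
           s 0 = SymA \<and> s (-1) = SymB \<and>
           (\<forall>j. j mod q \<notin> {(-p) mod q, (-p-1) mod q} \<longrightarrow> s (j + p) = s j) \<and>
           s (-p-1) = SymA \<and> s (-p) = SymB"
proof -
  have q0: "q > 0" using assms by simp
  obtain u where u: "0 \<le> u" "u < q" "[p * u = 1] (mod q)"
    using coprime_iff_invertible'_int[OF q0] assms(4) by blast
  have pu: "(p * u) mod q = 1" using u(3) assms(1) by (simp add: cong_def)
  have u1: "u \<ge> 1" using pu u(1) assms(1) by (cases "u = 0") auto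
  define s where "s j = (if (j * u) mod q + u < q then SymA else SymB)" for j
  have jr: "j mod q = (((j * u) mod q) * p) mod q" for j
  proof -
    have "(((j * u) mod q) * p) mod q = (j * (p * u)) mod q"
      using mod_mult_left_eq[of "j*u" q p] by (simp add: algebra_simps)
    also have "\<dots> = (j * ((p * u) mod q)) mod q" by (simp add: mod_mult_right_eq)
    also have "\<dots> = j mod q" using pu by simp
    finally show ?thesis by simp
  qed
  have mneg: "(x * u) mod q = (q - ((y * u) mod q)) mod q" if "x = - y" for x y
  proof -
    have "(x * u) mod q = (- ((y*u) mod q)) mod q" using that by (simp add: mod_minus_eq)
    also have "\<dots> = (q - ((y * u) mod q)) mod q"
      using mod_add_self1[of "- ((y*u) mod q)" q] by simp
    finally show ?thesis .
  qed
  have s0: "s 0 = SymA" using u by (simp add: s_def)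
  have r1: "((-1) * u) mod q = q - u"
  proof -
    have "((-1) * u) mod q = (q - ((1 * u) mod q)) mod q" by (rule mneg) simp
    also have "(1 * u) mod q = u" using u by simp
    also have "(q - u) mod q = q - u" using u u1 by (intro mod_pos_pos_trivial) auto
    finally show ?thesis .
  qed
  have s1: "s (-1) = SymB" using r1 by (simp add: s_def)
  have r2: "((-p) * u) mod q = q - 1"
  proof -
    have "((-p) * u) mod q = (q - ((p * u) mod q)) mod q" by (rule mneg) simp
    also have "(p * u) mod q = 1" using pu .
    also have "(q - 1) mod q = q - 1" using assms(1) by (intro mod_pos_pos_trivial) auto
    finally show ?thesis .
  qed
  have s2: "s (-p) = SymB" using r2 u1 by (simp add: s_def)
  have r3: "((-p-1) * u) mod q = q - 1 - u"
  proof -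
    have "((-p-1) * u) mod q = (q - (((p+1) * u) mod q)) mod q" by (rule mneg) simp
    also have "((p+1) * u) mod q = (1 + u) mod q"
      using pu by (metis distrib_right mult_1 mod_add_left_eq)
    finally have "((-p-1) * u) mod q = (q - (1 + u) mod q) mod q" .
    also have "(q - (1 + u) mod q) mod q = q - 1 - u"
    proof (cases "u = q - 1")
      case True then show ?thesis by simp
    next
      case False
      then have "(1 + u) mod q = 1 + u" using u u1 by (intro mod_pos_pos_trivial) auto
      moreover have "(q - (1 + u)) mod q = q - (1 + u)" using u u1 False
        by (intro mod_pos_pos_trivial) auto
      ultimately show ?thesis by simp
    qed
    finally show ?thesis .
  qed
  have s3: "s (-p-1) = SymA" using r3 u by (simp add: s_def)
  have per: "periodic_seq q s"
    unfolding periodic_seq_def s_def by (simp add: distrib_right)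
  have step: "s (j + p) = s j" if "j mod q \<notin> {(-p) mod q, (-p-1) mod q}" for j
  proof -
    define r where "r = (j * u) mod q"
    have r0: "0 \<le> r" "r < q" using q0 by (simp_all add: r_def)
    have rn1: "r \<noteq> q - 1"
    proof
      assume "r = q - 1"
      then have "j mod q = ((q - 1) * p) mod q" using jr[of j] by (simp add: r_def)
      also have "((q - 1) * p) mod q = (-p + p * q) mod q" by (simp add: algebra_simps)
      also have "\<dots> = (-p) mod q" by (rule mod_mult_self1)
      finally show False using that by simp
    qed
    have rn2: "r \<noteq> q - 1 - u"
    proof
      assume "r = q - 1 - u"
      then have "j mod q = ((q - 1 - u) * p) mod q" using jr[of j] by (simp add: r_def)
      also have "\<dots> = (q * p + (-p - 1) + (1 - p * u)) mod q" by (simp add: algebra_simps)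
      also have "\<dots> = ((-p - 1) + (1 - p * u)) mod q" by (simp add: add.assoc)
      also have "\<dots> = ((-p - 1) + (1 - (p * u) mod q)) mod q"
        by (metis mod_add_right_eq mod_diff_right_eq)
      also have "\<dots> = (-p-1) mod q" using pu by simp
      finally show False using that by simp
    qed
    have "((j + p) * u) mod q = (r + (p * u) mod q) mod q"
      by (simp add: r_def distrib_right mod_add_eq)
    also have "\<dots> = r + 1" using pu r0 rn1 by simp
    finally have "((j + p) * u) mod q = r + 1" .
    then show ?thesis using rn2 by (simp add: s_def r_def[symmetric])
  qed
  let ?P = "\<lambda>s. periodic_seq q s \<and>
           s 0 = SymA \<and> s (-1) = SymB \<and>
           (\<forall>j. j mod q \<notin> {(-p) mod q, (-p-1) mod q} \<longrightarrow> s (j + p) = s j) \<and>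
           s (-p-1) = SymA \<and> s (-p) = SymB"
  have ex: "?P s" using per s0 s1 s2 s3 step by blast
  have un: "t = s" if Pt: "?P t" for t
  proof
    fix j
    define n where "n = nat ((j * u) mod q)"
    have nj: "int n * p mod q = j mod q" using jr[of j] q0 by (simp add: n_def)
    have "t j = t (j mod q)" using Pt per_mod by blast
    also have "\<dots> = t (int n * p)" using Pt per_mod nj by metis
    also have "\<dots> = s (int n * p)" using uniq_aux[OF Pt ex] .
    also have "\<dots> = s (j mod q)" using per per_mod nj by metis
    also have "\<dots> = s j" using per per_mod by metis
    finally show "t j = s j" .
  qed
  show ?thesis using ex un by blast
qed

end
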